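(* Let $\mathcal C$ be a small cylinder category. A morphism of $\mathcal C$ is a weak equivalence in $\mathcal C$ if and only if (its Yoneda image) is a weak equivalence in $\widetilde{\mathcal C}$.
   Context: A cylinder category is a category $\mathcal C$ with two classes of morphisms, the cofibrations and the weak equivalences (morphisms in both classes are called trivial cofibrations), such that: (1) both classes contain all isomorphisms and are closed under composition; (2) weak equivalences satisfy 2-out-of-6: if $f,g,h$ are composable and $f\circ g$, $g\circ h$ are weak equivalences then $f,g,h,f\circ g\circ h$ are; (3) $\mathcal C$ has an initial object $0$ and every $0\to X$ is a cofibration; (4) pushouts of cofibrations along arbitrary maps exist and are cofibrations; (5) pushouts of trivial cofibrations are trivial cofibrations; (6) for every object $X$ the codiagonal $X\sqcup X\to X$ factors as a cofibration $X\sqcup X\hookrightarrow IX$ followed by a weak equivalence $IX\to X$; (7) every trivial cofibration admits a retraction. For a cofibration $A\hookrightarrow B$, a relative cylinder object is a factorization $B\sqcup_A B\hookrightarrow I_AB\xrightarrow{\sim}B$ of the codiagonal into a cofibration followed by a weak equivalence. For a small cylinder category $\mathcal C$, $\widetilde{\mathcal C}$ is the category of presheaves of sets on $\mathcal C$ sending the initial object to a singleton and pushouts along cofibrations to pullbacks of sets; $\mathcal C$ is identified with its image under the Yoneda embedding. A morphism $f:X\to Y$ of $\widetilde{\mathcal C}$ is a weak equivalence if for every cofibration $i:A\hookrightarrow B$ of $\mathcal C$ and every commutative square with top $u:A\to X$ and bottom $w:B\to Y$ (so $f\circ u=w\circ i$), there exist $a:B\to X$ with $a\circ i=u$ and $h:I_AB\to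 Y$ for some relative cylinder object such that $h$ restricted along the two inclusions $B\to I_AB$ is $f\circ a$ and $w$. *)

theory Defs
  imports Main
begin

text \<open>A small category: objects of type 'o, arrows of type 'm, carriers given as sets.
  Comp g f is the composite g after f (defined when Cod f = Dom g).\<close>

record ('o, 'm) cat =
  Obj :: "'o set"
  Arr :: "'m set"
  Dom :: "'m \<Rightarrow> 'o"
  Cod :: "'m \<Rightarrow> 'o"
  Id  :: "'o \<Rightarrow> 'm"
  Comp :: "'m \<Rightarrow> 'm \<Rightarrow> 'm"

definition hom :: "('o, 'm) cat \<Rightarrow> 'o \<Rightarrow> 'o \<Rightarrow> 'm set" where
  "hom C A B = {f \<in> Arr C. Dom C f = A \<and> Cod C f = B}"

definition category :: "('o, 'm) cat \<Rightarrow> bool" where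
  "category C \<longleftrightarrow>
     (\<forall>f\<in>Arr C. Dom C f \<in> Obj C \<and> Cod C f \<in> Obj C) \<and>
     (\<forall>A\<in>Obj C. Id C A \<in> hom C A A) \<and>
     (\<forall>f\<in>Arr C. \<forall>g\<in>Arr C. Cod C f = Dom C g \<longrightarrow>
        Comp C g f \<in> hom C (Dom C f) (Cod C g)) \<and>
     (\<forall>f\<in>Arr C. \<forall>g\<in>Arr C. \<forall>h\<in>Arr C. Cod C f = Dom C g \<longrightarrow> Cod C g = Dom C h \<longrightarrow>
        Comp C h (Comp C g f) = Comp C (Comp C h g) f) \<and>
     (\<forall>f\<in>Arr C. Comp C (Id C (Cod C f)) f = f \<and> Comp C f (Id C (Dom C f)) = f)"

definition iso :: "('o, 'm) cat \<Rightarrow> 'm \<Rightarrow> bool" where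
  "iso C f \<longleftrightarrow> f \<in> Arr C \<and>
     (\<exists>g\<in>hom C (Cod C f) (Dom C f). Comp C g f = Id C (Dom C f) \<and> Comp C f g = Id C (Cod C f))"

definition initial :: "('o, 'm) cat \<Rightarrow> 'o \<Rightarrow> bool" where
  "initial C z \<longleftrightarrow> z \<in> Obj C \<and> (\<forall>X\<in>Obj C. \<exists>!f. f \<in> hom C z X)"

definition pushout :: "('o, 'm) cat \<Rightarrow> 'm \<Rightarrow> 'm \<Rightarrow> 'm \<Rightarrow> 'm \<Rightarrow> bool" where
  "pushout C i f k j \<longleftrightarrow>
     i \<in> Arr C \<and> f \<in> Arr C \<and> k \<in> Arr C \<and> j \<in> Arr C \<and>
     Dom C i = Dom C f \<and> Dom C k = Cod C i \<and> Dom C j = Cod C f \<and> Cod C k = Cod C j \<and>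
     Comp C k i = Comp C j f \<and>
     (\<forall>Q g h. g \<in> hom C (Cod C i) Q \<and> h \<in> hom C (Cod C f) Q \<and> Comp C g i = Comp C h f \<longrightarrow>
        (\<exists>!u. u \<in> hom C (Cod C k) Q \<and> Comp C u k = g \<and> Comp C u j = h))"

definition cylinder_category :: "('o, 'm) cat \<Rightarrow> 'm set \<Rightarrow> 'm set \<Rightarrow> bool" where
  "cylinder_category C cof we \<longleftrightarrow>
     category C \<and> cof \<subseteq> Arr C \<and> we \<subseteq> Arr C \<and>
     \<comment> \<open>(1)\<close>
     (\<forall>f. iso C f \<longrightarrow> f \<in> cof \<and> f \<in> we) \<and>
     (\<forall>f\<in>cof. \<forall>g\<in>cof. Cod C f = Dom C g \<longrightarrow> Comp C g f \<in> cof) \<and>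
     (\<forall>f\<in>we. \<forall>g\<in>we. Cod C f = Dom C g \<longrightarrow> Comp C g f \<in> we) \<and>
     \<comment> \<open>(2) 2-out-of-6\<close>
     (\<forall>f g h. f \<in> Arr C \<and> g \<in> Arr C \<and> h \<in> Arr C \<and> Cod C h = Dom C g \<and> Cod C g = Dom C f \<and>
        Comp C f g \<in> we \<and> Comp C g h \<in> we \<longrightarrow>
        f \<in> we \<and> g \<in> we \<and> h \<in> we \<and> Comp C f (Comp C g h) \<in> we) \<and>
     \<comment> \<open>(3)\<close>
     (\<exists>z. initial C z) \<and>
     (\<forall>z X e. initial C z \<and> e \<in> hom C z X \<longrightarrow> e \<in> cof) \<and>
     \<comment> \<open>(4)\<close>
     (\<forall>i\<in>cof. \<forall>f\<in>Arr C. Dom C f = Dom C i \<longrightarrow> (\<exists>k j. pushout C i f k j)) \<and>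
     (\<forall>i f k j. i \<in> cof \<and> pushout C i f k j \<longrightarrow> j \<in> cof) \<and>
     \<comment> \<open>(5)\<close>
     (\<forall>i f k j. i \<in> cof \<and> i \<in> we \<and> pushout C i f k j \<longrightarrow> j \<in> cof \<and> j \<in> we) \<and>
     \<comment> \<open>(6): for every coproduct X \<squnion> X (pushout over the initial object), the codiagonal
        d (d \<circ> k = id, d \<circ> j = id) factors as a cofibration followed by a weak equivalence\<close>
     (\<forall>z X e k j d. initial C z \<and> X \<in> Obj C \<and> e \<in> hom C z X \<and> pushout C e e k j \<and>
        d \<in> hom C (Cod C k) X \<and> Comp C d k = Id C X \<and> Comp C d j = Id C X \<longrightarrow>
        (\<exists>c p. c \<in> cof \<and> p \<in> we \<and> Dom C c = Cod C k \<and> Cod C c = Dom C p \<and>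
               Cod C p = X \<and> Comp C p c = d)) \<and>
     \<comment> \<open>(7)\<close>
     (\<forall>i. i \<in> cof \<and> i \<in> we \<longrightarrow>
        (\<exists>r\<in>hom C (Cod C i) (Dom C i). Comp C r i = Id C (Dom C i)))"

text \<open>Relative cylinder object for a cofibration i : A \<rightarrow> B: a pushout B \<squnion>_A B (legs k, j)
  and a factorization p \<circ> c of the codiagonal with c a cofibration and p a weak equivalence.
  The two inclusions B \<rightarrow> I_A B are c \<circ> k and c \<circ> j.\<close>

definition rel_cyl :: "('o, 'm) cat \<Rightarrow> 'm set \<Rightarrow> 'm set \<Rightarrow> 'm \<Rightarrow> 'm \<Rightarrow> 'm \<Rightarrow> 'm \<Rightarrow> 'm \<Rightarrow> bool" where
  "rel_cyl C cof we i k j c p \<longleftrightarrow>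
     i \<in> cof \<and> pushout C i i k j \<and> c \<in> cof \<and> p \<in> we \<and>
     Dom C c = Cod C k \<and> Cod C c = Dom C p \<and> Cod C p = Cod C i \<and>
     Comp C (Comp C p c) k = Id C (Cod C i) \<and> Comp C (Comp C p c) j = Id C (Cod C i)"

record ('o, 'm, 'v) psh =
  PObj :: "'o \<Rightarrow> 'v set"
  PMap :: "'m \<Rightarrow> 'v \<Rightarrow> 'v"

definition presheaf :: "('o, 'm) cat \<Rightarrow> ('o, 'm, 'v) psh \<Rightarrow> bool" where
  "presheaf C F \<longleftrightarrow>
     (\<forall>f\<in>Arr C. \<forall>x\<in>PObj F (Cod C f). PMap F f x \<in> PObj F (Dom C f)) \<and>
     (\<forall>A\<in>Obj C. \<forall>x\<in>PObj F A. PMap F (Id C A) x = x) \<and>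
     (\<forall>f\<in>Arr C. \<forall>g\<in>Arr C. Cod C f = Dom C g \<longrightarrow>
        (\<forall>x\<in>PObj F (Cod C g). PMap F (Comp C g f) x = PMap F f (PMap F g x)))"

text \<open>Objects of C-tilde: presheaves sending the initial object to a singleton and pushouts
  along cofibrations to pullbacks of sets.\<close>

definition in_tilde :: "('o, 'm) cat \<Rightarrow> 'm set \<Rightarrow> ('o, 'm, 'v) psh \<Rightarrow> bool" where
  "in_tilde C cof F \<longleftrightarrow> presheaf C F \<and>
     (\<forall>z. initial C z \<longrightarrow> (\<exists>x. PObj F z = {x})) \<and>
     (\<forall>i f k j. i \<in> cof \<and> pushout C i f k j \<longrightarrow>
        bij_betw (\<lambda>x. (PMap F k x, PMap F j x)) (PObj F (Cod C k))
          {(b, c). b \<in> PObj F (Cod C i) \<and> c \<in> PObj F (Cod C f) \<and> PMap F i b = PMap F f c})"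

definition nat_trans :: "('o, 'm) cat \<Rightarrow> ('o, 'm, 'v) psh \<Rightarrow> ('o, 'm, 'w) psh \<Rightarrow>
    ('o \<Rightarrow> 'v \<Rightarrow> 'w) \<Rightarrow> bool" where
  "nat_trans C F G \<eta> \<longleftrightarrow>
     (\<forall>A\<in>Obj C. \<forall>x\<in>PObj F A. \<eta> A x \<in> PObj G A) \<and>
     (\<forall>f\<in>Arr C. \<forall>x\<in>PObj F (Cod C f). \<eta> (Dom C f) (PMap F f x) = PMap G f (\<eta> (Cod C f) x))"

definition nt_eq :: "('o, 'm) cat \<Rightarrow> ('o, 'm, 'v) psh \<Rightarrow> ('o \<Rightarrow> 'v \<Rightarrow> 'w) \<Rightarrow> ('o \<Rightarrow> 'v \<Rightarrow> 'w) \<Rightarrow> bool" where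
  "nt_eq C F \<eta> \<theta> \<longleftrightarrow> (\<forall>A\<in>Obj C. \<forall>x\<in>PObj F A. \<eta> A x = \<theta> A x)"

definition nt_comp :: "('o \<Rightarrow> 'v \<Rightarrow> 'w) \<Rightarrow> ('o \<Rightarrow> 'u \<Rightarrow> 'v) \<Rightarrow> ('o \<Rightarrow> 'u \<Rightarrow> 'w)" where
  "nt_comp \<eta> \<theta> = (\<lambda>A x. \<eta> A (\<theta> A x))"

definition yon :: "('o, 'm) cat \<Rightarrow> 'o \<Rightarrow> ('o, 'm, 'm) psh" where
  "yon C X = \<lparr>PObj = (\<lambda>A. hom C A X), PMap = (\<lambda>f g. Comp C g f)\<rparr>"

definition yon_arr :: "('o, 'm) cat \<Rightarrow> 'm \<Rightarrow> ('o \<Rightarrow> 'm \<Rightarrow> 'm)" where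
  "yon_arr C h = (\<lambda>A g. Comp C h g)"

definition we_tilde :: "('o, 'm) cat \<Rightarrow> 'm set \<Rightarrow> 'm set \<Rightarrow>
    ('o, 'm, 'v) psh \<Rightarrow> ('o, 'm, 'w) psh \<Rightarrow> ('o \<Rightarrow> 'v \<Rightarrow> 'w) \<Rightarrow> bool" where
  "we_tilde C cof we X Y f \<longleftrightarrow>
     in_tilde C cof X \<and> in_tilde C cof Y \<and> nat_trans C X Y f \<and>
     (\<forall>i u w. i \<in> cof \<and>
        nat_trans C (yon C (Dom C i)) X u \<and> nat_trans C (yon C (Cod C i)) Y w \<and>
        nt_eq C (yon C (Dom C i)) (nt_comp f u) (nt_comp w (yon_arr C i)) \<longrightarrow>
        (\<exists>a. nat_trans C (yon C (Cod C i)) X a \<and>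
             nt_eq C (yon C (Dom C i)) (nt_comp a (yon_arr C i)) u \<and>
             (\<exists>k j c p h. rel_cyl C cof we i k j c p \<and>
                nat_trans C (yon C (Cod C c)) Y h \<and>
                nt_eq C (yon C (Cod C i)) (nt_comp h (yon_arr C (Comp C c k))) (nt_comp f a) \<and>
                nt_eq C (yon C (Cod C i)) (nt_comp h (yon_arr C (Comp C c j))) w)))"

end

theory Submission
  imports Defs
begin


locale cylcat =
  fixes C :: "('o,'m) cat" and cof we :: "'m set"
  assumes cc: "cylinder_category C cof we"
begin

abbreviation cmp :: "'m \<Rightarrow> 'm \<Rightarrow> 'm" (infixr "\<cdot>" 55) where "g \<cdot> f \<equiv> Comp C g f"

lemma cat: "category C" using cc unfolding cylinder_category_def by (elim conjE)

lemma Dom_Obj: "f \<in> Arr C \<Longrightarrow> Dom C f \<in> Obj C" using cat unfolding category_def by blast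
lemma Cod_Obj: "f \<in> Arr C \<Longrightarrow> Cod C f \<in> Obj C" using cat unfolding category_def by blast

lemma comp_Arr[simp]: "f \<in> Arr C \<Longrightarrow> g \<in> Arr C \<Longrightarrow> Cod C f = Dom C g \<Longrightarrow> g \<cdot> f \<in> Arr C"
  using cat unfolding category_def hom_def by blast
lemma Dom_comp[simp]: "f \<in> Arr C \<Longrightarrow> g \<in> Arr C \<Longrightarrow> Cod C f = Dom C g \<Longrightarrow> Dom C (g \<cdot> f) = Dom C f"
  using cat unfolding category_def hom_def by blast
lemma Cod_comp[simp]: "f \<in> Arr C \<Longrightarrow> g \<in> Arr C \<Longrightarrow> Cod C f = Dom C g \<Longrightarrow> Cod C (g \<cdot> f) = Cod C g"
  using cat unfolding category_def hom_def by blast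
lemma assoc[simp]: "f \<in> Arr C \<Longrightarrow> g \<in> Arr C \<Longrightarrow> h \<in> Arr C \<Longrightarrow> Cod C f = Dom C g \<Longrightarrow> Cod C g = Dom C h \<Longrightarrow>
   (h \<cdot> g) \<cdot> f = h \<cdot> (g \<cdot> f)"
  using cat unfolding category_def by metis
lemma Id_Arr[simp]: "A \<in> Obj C \<Longrightarrow> Id C A \<in> Arr C"
  using cat unfolding category_def hom_def by blast
lemma Dom_Id[simp]: "A \<in> Obj C \<Longrightarrow> Dom C (Id C A) = A"
  using cat unfolding category_def hom_def by blast
lemma Cod_Id[simp]: "A \<in> Obj C \<Longrightarrow> Cod C (Id C A) = A"
  using cat unfolding category_def hom_def by blast
lemma Id_left[simp]: "f \<in> Arr C \<Longrightarrow> Cod C f = B \<Longrightarrow> Id C B \<cdot> f = f"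
  using cat unfolding category_def by blast
lemma Id_right[simp]: "f \<in> Arr C \<Longrightarrow> Dom C f = A \<Longrightarrow> f \<cdot> Id C A = f"
  using cat unfolding category_def by blast

lemma homD: "f \<in> hom C A B \<Longrightarrow> f \<in> Arr C \<and> Dom C f = A \<and> Cod C f = B"
  unfolding hom_def by blast
lemma homI: "f \<in> Arr C \<Longrightarrow> Dom C f = A \<Longrightarrow> Cod C f = B \<Longrightarrow> f \<in> hom C A B"
  unfolding hom_def by blast
lemma hom_Obj: "f \<in> hom C A B \<Longrightarrow> A \<in> Obj C \<and> B \<in> Obj C"
  using Dom_Obj Cod_Obj homD by blast
lemma comp_hom: "f \<in> hom C A B \<Longrightarrow> g \<in> hom C B D \<Longrightarrow> g \<cdot> f \<in> hom C A D"
  by (simp add: hom_def)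
lemma Id_hom: "A \<in> Obj C \<Longrightarrow> Id C A \<in> hom C A A"
  by (simp add: hom_def)

lemma pair_ext: "a \<cdot> b = c \<Longrightarrow> b \<in> Arr C \<Longrightarrow> a \<in> Arr C \<Longrightarrow> Cod C b = Dom C a \<Longrightarrow> x \<in> Arr C \<Longrightarrow> Cod C x = Dom C b
   \<Longrightarrow> a \<cdot> (b \<cdot> x) = c \<cdot> x"
  by (metis assoc)


lemma cc_conj: "category C \<and> cof \<subseteq> Arr C \<and> we \<subseteq> Arr C \<and>
     (\<forall>f. iso C f \<longrightarrow> f \<in> cof \<and> f \<in> we) \<and>
     (\<forall>f\<in>cof. \<forall>g\<in>cof. Cod C f = Dom C g \<longrightarrow> Comp C g f \<in> cof) \<and>
     (\<forall>f\<in>we. \<forall>g\<in>we. Cod C f = Dom C g \<longrightarrow> Comp C g f \<in> we) \<and>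
     (\<forall>f g h. f \<in> Arr C \<and> g \<in> Arr C \<and> h \<in> Arr C \<and> Cod C h = Dom C g \<and> Cod C g = Dom C f \<and>
        Comp C f g \<in> we \<and> Comp C g h \<in> we \<longrightarrow>
        f \<in> we \<and> g \<in> we \<and> h \<in> we \<and> Comp C f (Comp C g h) \<in> we) \<and>
     (\<exists>z. initial C z) \<and>
     (\<forall>z X e. initial C z \<and> e \<in> hom C z X \<longrightarrow> e \<in> cof) \<and>
     (\<forall>i\<in>cof. \<forall>f\<in>Arr C. Dom C f = Dom C i \<longrightarrow> (\<exists>k j. pushout C i f k j)) \<and>
     (\<forall>i f k j. i \<in> cof \<and> pushout C i f k j \<longrightarrow> j \<in> cof) \<and>
     (\<forall>i f k j. i \<in> cof \<and> i \<in> we \<and> pushout C i f k j \<longrightarrow> j \<in> cof \<and> j \<in> we) \<and>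
     (\<forall>z X e k j d. initial C z \<and> X \<in> Obj C \<and> e \<in> hom C z X \<and> pushout C e e k j \<and>
        d \<in> hom C (Cod C k) X \<and> Comp C d k = Id C X \<and> Comp C d j = Id C X \<longrightarrow>
        (\<exists>c p. c \<in> cof \<and> p \<in> we \<and> Dom C c = Cod C k \<and> Cod C c = Dom C p \<and>
               Cod C p = X \<and> Comp C p c = d)) \<and>
     (\<forall>i. i \<in> cof \<and> i \<in> we \<longrightarrow>
        (\<exists>r\<in>hom C (Cod C i) (Dom C i). Comp C r i = Id C (Dom C i)))"
  using cc unfolding cylinder_category_def .

lemmas cat0 = cc_conj[THEN conjunct1]
lemmas ccof = cc_conj[THEN conjunct2, THEN conjunct1]
lemmas cwe = cc_conj[THEN conjunct2, THEN conjunct2, THEN conjunct1]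
lemmas ciso = cc_conj[THEN conjunct2, THEN conjunct2, THEN conjunct2, THEN conjunct1]
lemmas ccofc = cc_conj[THEN conjunct2, THEN conjunct2, THEN conjunct2, THEN conjunct2, THEN conjunct1]
lemmas cwec = cc_conj[THEN conjunct2, THEN conjunct2, THEN conjunct2, THEN conjunct2, THEN conjunct2, THEN conjunct1]
lemmas c26 = cc_conj[THEN conjunct2, THEN conjunct2, THEN conjunct2, THEN conjunct2, THEN conjunct2, THEN conjunct2, THEN conjunct1]
lemmas cinit = cc_conj[THEN conjunct2, THEN conjunct2, THEN conjunct2, THEN conjunct2, THEN conjunct2, THEN conjunct2, THEN conjunct2, THEN conjunct1]
lemmas cinitcof = cc_conj[THEN conjunct2, THEN conjunct2, THEN conjunct2, THEN conjunct2, THEN conjunct2, THEN conjunct2, THEN conjunct2, THEN conjunct2, THEN conjunct1]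
lemmas cpo = cc_conj[THEN conjunct2, THEN conjunct2, THEN conjunct2, THEN conjunct2, THEN conjunct2, THEN conjunct2, THEN conjunct2, THEN conjunct2, THEN conjunct2, THEN conjunct1]
lemmas cpocof = cc_conj[THEN conjunct2, THEN conjunct2, THEN conjunct2, THEN conjunct2, THEN conjunct2, THEN conjunct2, THEN conjunct2, THEN conjunct2, THEN conjunct2, THEN conjunct2, THEN conjunct1]
lemmas cpotcof = cc_conj[THEN conjunct2, THEN conjunct2, THEN conjunct2, THEN conjunct2, THEN conjunct2, THEN conjunct2, THEN conjunct2, THEN conjunct2, THEN conjunct2, THEN conjunct2, THEN conjunct2, THEN conjunct1]
lemmas cax6 = cc_conj[THEN conjunct2, THEN conjunct2, THEN conjunct2, THEN conjunct2, THEN conjunct2, THEN conjunct2, THEN conjunct2, THEN conjunct2, THEN conjunct2, THEN conjunct2, THEN conjunct2, THEN conjunct2, THEN conjunct1]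
lemmas cax7 = cc_conj[THEN conjunct2, THEN conjunct2, THEN conjunct2, THEN conjunct2, THEN conjunct2, THEN conjunct2, THEN conjunct2, THEN conjunct2, THEN conjunct2, THEN conjunct2, THEN conjunct2, THEN conjunct2, THEN conjunct2]

lemma cof_Arr: "cof \<subseteq> Arr C" using ccof by blast
lemma we_Arr: "we \<subseteq> Arr C" using cwe by blast

lemma iso_Id: "A \<in> Obj C \<Longrightarrow> iso C (Id C A)"
  unfolding iso_def by (rule conjI, simp, rule bexI[of _ "Id C A"], auto simp: hom_def)

lemma iso_cw: "iso C f \<Longrightarrow> f \<in> cof \<and> f \<in> we"
  using ciso by blast
lemma Id_we: "A \<in> Obj C \<Longrightarrow> Id C A \<in> we"
  using iso_cw iso_Id by blast
lemma Id_cof: "A \<in> Obj C \<Longrightarrow> Id C A \<in> cof"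
  using iso_cw iso_Id by blast

lemma cof_comp: "f \<in> cof \<Longrightarrow> g \<in> cof \<Longrightarrow> Cod C f = Dom C g \<Longrightarrow> g \<cdot> f \<in> cof"
  using ccofc by blast
lemma we_comp: "f \<in> we \<Longrightarrow> g \<in> we \<Longrightarrow> Cod C f = Dom C g \<Longrightarrow> g \<cdot> f \<in> we"
  using cwec by blast

lemma two_six: "f \<in> Arr C \<Longrightarrow> g \<in> Arr C \<Longrightarrow> h \<in> Arr C \<Longrightarrow> Cod C h = Dom C g \<Longrightarrow> Cod C g = Dom C f \<Longrightarrow>
   f \<cdot> g \<in> we \<Longrightarrow> g \<cdot> h \<in> we \<Longrightarrow> f \<in> we \<and> g \<in> we \<and> h \<in> we"
  using c26 by blast

lemma W1: "g \<in> hom C A B \<Longrightarrow> f \<in> hom C B D \<Longrightarrow> f \<cdot> g \<in> we \<Longrightarrow> g \<in> we \<Longrightarrow> f \<in> we"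
  using two_six[of f g "Id C A"] hom_Obj[of g A B] by (auto simp: hom_def)
lemma W2: "g \<in> hom C A B \<Longrightarrow> f \<in> hom C B D \<Longrightarrow> f \<cdot> g \<in> we \<Longrightarrow> f \<in> we \<Longrightarrow> g \<in> we"
  using two_six[of "Id C D" f g] hom_Obj[of f B D] by (auto simp: hom_def)

lemma ex_init: "\<exists>z. initial C z" using cinit by blast

definition z0 where "z0 = (SOME z. initial C z)"
lemma init: "initial C z0" unfolding z0_def using ex_init by (rule someI_ex)
lemma z0_Obj: "z0 \<in> Obj C" using init unfolding initial_def by blast
lemma init_unique: "u \<in> hom C z0 X \<Longrightarrow> v \<in> hom C z0 X \<Longrightarrow> u = v"
  using init hom_Obj unfolding initial_def by blast
definition ini where "ini X = (THE e. e \<in> hom C z0 X)"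
lemma ini_hom: "X \<in> Obj C \<Longrightarrow> ini X \<in> hom C z0 X"
  unfolding ini_def using init unfolding initial_def by (metis theI')
lemma ini_cof: "X \<in> Obj C \<Longrightarrow> ini X \<in> cof"
  using cinitcof init ini_hom by blast

lemma poD: "pushout C i f k j \<Longrightarrow> i \<in> Arr C \<and> f \<in> Arr C \<and> k \<in> Arr C \<and> j \<in> Arr C \<and>
   Dom C f = Dom C i \<and> Dom C k = Cod C i \<and> Dom C j = Cod C f \<and> Cod C j = Cod C k \<and> k \<cdot> i = j \<cdot> f"
  unfolding pushout_def by auto

lemma po_univ: "pushout C i f k j \<Longrightarrow> g \<in> hom C (Cod C i) Q \<Longrightarrow> h \<in> hom C (Cod C f) Q \<Longrightarrow> g \<cdot> i = h \<cdot> f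
  \<Longrightarrow> \<exists>u. u \<in> hom C (Cod C k) Q \<and> u \<cdot> k = g \<and> u \<cdot> j = h"
  unfolding pushout_def by blast

lemma po_uniq: assumes P: "pushout C i f k j" and u: "u \<in> hom C (Cod C k) Q" and v: "v \<in> hom C (Cod C k) Q"
  and "u \<cdot> k = v \<cdot> k" "u \<cdot> j = v \<cdot> j" shows "u = v"
proof -
  have d: "i \<in> Arr C \<and> f \<in> Arr C \<and> k \<in> Arr C \<and> j \<in> Arr C \<and>
   Dom C f = Dom C i \<and> Dom C k = Cod C i \<and> Dom C j = Cod C f \<and> Cod C j = Cod C k \<and> k \<cdot> i = j \<cdot> f"
    using poD[OF P] .
  have "(u \<cdot> k) \<cdot> i = (u \<cdot> j) \<cdot> f" using d u by (simp add: hom_def)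
  moreover have "u \<cdot> k \<in> hom C (Cod C i) Q" "u \<cdot> j \<in> hom C (Cod C f) Q" using d u by (auto simp: hom_def)
  ultimately have "\<exists>!w. w \<in> hom C (Cod C k) Q \<and> w \<cdot> k = u \<cdot> k \<and> w \<cdot> j = u \<cdot> j"
    using P unfolding pushout_def by blast
  thus ?thesis using assms by metis
qed

lemma po_sym: "pushout C i f k j \<Longrightarrow> pushout C f i j k"
  unfolding pushout_def by metis

lemma po_exists: "i \<in> cof \<Longrightarrow> f \<in> Arr C \<Longrightarrow> Dom C f = Dom C i \<Longrightarrow> \<exists>k j. pushout C i f k j"
  using cpo by blast
lemma po_cof: "i \<in> cof \<Longrightarrow> pushout C i f k j \<Longrightarrow> j \<in> cof"
  using cpocof by blast
lemma po_tcof: "i \<in> cof \<Longrightarrow> i \<in> we \<Longrightarrow> pushout C i f k j \<Longrightarrow> j \<in> cof \<and> j \<in> we"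
  using cpotcof by blast
lemma retr: "i \<in> cof \<Longrightarrow> i \<in> we \<Longrightarrow> \<exists>r \<in> hom C (Cod C i) (Dom C i). r \<cdot> i = Id C (Dom C i)"
  using cax7 by blast
lemma ax6: "X \<in> Obj C \<Longrightarrow> pushout C (ini X) (ini X) k j \<Longrightarrow>
   d \<in> hom C (Cod C k) X \<Longrightarrow> d \<cdot> k = Id C X \<Longrightarrow> d \<cdot> j = Id C X \<Longrightarrow>
        (\<exists>c p. c \<in> cof \<and> p \<in> we \<and> Dom C c = Cod C k \<and> Cod C c = Dom C p \<and>
               Cod C p = X \<and> p \<cdot> c = d)"
  using cax6 init ini_hom by blast

lemma coprod: "U \<in> Obj C \<Longrightarrow> V \<in> Obj C \<Longrightarrow> \<exists>k j. pushout C (ini U) (ini V) k j"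
  using po_exists ini_cof ini_hom by (simp add: hom_def)

lemma copair: assumes P: "pushout C (ini U) (ini V) k j" and "U \<in> Obj C" "V \<in> Obj C"
  and "a \<in> hom C U Q" "b \<in> hom C V Q" shows "\<exists>u. u \<in> hom C (Cod C k) Q \<and> u \<cdot> k = a \<and> u \<cdot> j = b"
proof -
  have "a \<cdot> ini U = b \<cdot> ini V" using assms ini_hom
    by (intro init_unique[of _ Q]) (auto simp: hom_def)
  thus ?thesis using po_univ[OF P] assms ini_hom by (auto simp: hom_def)
qed

end


context cylcat begin

lemma factor: assumes g: "g \<in> hom C U V"
  shows "\<exists>M c p. c \<in> hom C U M \<and> c \<in> cof \<and> p \<in> hom C M V \<and> p \<in> we \<and> p \<cdot> c = g"
proof -
  have U: "U \<in> Obj C" and V: "V \<in> Obj C" using hom_Obj[OF g] by auto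
  obtain k j where P1: "pushout C (ini U) (ini U) k j" using coprod[OF U U] by blast
  define S where "S = Cod C k"
  have k: "k \<in> hom C U S" and j: "j \<in> hom C U S" using poD[OF P1] ini_hom[OF U] unfolding S_def
    by (auto simp: hom_def)
  obtain d where d: "d \<in> hom C S U" and dk: "d \<cdot> k = Id C U" and dj: "d \<cdot> j = Id C U"
    using copair[OF P1 U U Id_hom[OF U] Id_hom[OF U]] unfolding S_def by blast
  obtain c0 \<sigma> where c0: "c0 \<in> cof" and sg: "\<sigma> \<in> we" and c0d: "Dom C c0 = S" and c0c: "Cod C c0 = Dom C \<sigma>"
    and sc: "Cod C \<sigma> = U" and sc0: "\<sigma> \<cdot> c0 = d"
    using ax6[OF U P1 d[unfolded S_def] dk dj] unfolding S_def by blast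
  define IU where "IU = Cod C c0"
  have c0h: "c0 \<in> hom C S IU" and sh: "\<sigma> \<in> hom C IU U"
    using c0 sg cof_Arr we_Arr c0d c0c sc unfolding IU_def hom_def by auto
  obtain k' j' where P2: "pushout C (ini U) (ini V) k' j'" using coprod[OF U V] by blast
  define T where "T = Cod C k'"
  have k': "k' \<in> hom C U T" and j': "j' \<in> hom C V T" using poD[OF P2] ini_hom[OF U] ini_hom[OF V] unfolding T_def
    by (auto simp: hom_def)
  have j'g: "j' \<cdot> g \<in> hom C U T" using comp_hom[OF g j'] .
  obtain \<mu> where mu: "\<mu> \<in> hom C S T" and muk: "\<mu> \<cdot> k = k'" and muj: "\<mu> \<cdot> j = j' \<cdot> g"
    using copair[OF P1 U U k' j'g] unfolding S_def by blast
  obtain G m where P3: "pushout C c0 \<mu> G m"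
    using po_exists[OF c0, of \<mu>] mu c0d by (auto simp: hom_def)
  define M where "M = Cod C G"
  have G: "G \<in> hom C IU M" and m: "m \<in> hom C T M" and Gc0: "G \<cdot> c0 = m \<cdot> \<mu>"
    using poD[OF P3] c0h mu unfolding M_def by (auto simp: hom_def)
  have mcof: "m \<in> cof" using po_cof[OF c0 P3] .
  have k'cof: "k' \<in> cof" using po_cof[OF ini_cof[OF V] po_sym[OF P2]] .
  have jcof: "j \<in> cof" using po_cof[OF ini_cof[OF U] P1] .
  note ty = homD[OF g] homD[OF k] homD[OF j] homD[OF d] homD[OF c0h] homD[OF sh] homD[OF k'] homD[OF j']
    homD[OF mu] homD[OF G] homD[OF m]
  have Gc0x: "G \<cdot> (c0 \<cdot> x) = m \<cdot> (\<mu> \<cdot> x)" if "x \<in> Arr C" "Cod C x = S" for x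
    using pair_ext[OF Gc0] that ty by simp
  have sc0x: "\<sigma> \<cdot> (c0 \<cdot> x) = d \<cdot> x" if "x \<in> Arr C" "Cod C x = S" for x
    using pair_ext[OF sc0] that ty by simp
  have mukx: "\<mu> \<cdot> (k \<cdot> x) = k' \<cdot> x" if "x \<in> Arr C" "Cod C x = U" for x
    using pair_ext[OF muk] that ty by simp
  have mujx: "\<mu> \<cdot> (j \<cdot> x) = j' \<cdot> (g \<cdot> x)" if "x \<in> Arr C" "Cod C x = U" for x
    using pair_ext[OF muj] that ty by simp
  define s where "s = m \<cdot> k'"
  define t where "t = m \<cdot> j'"
  define i1 where "i1 = c0 \<cdot> j"
  have scof: "s \<in> cof" unfolding s_def using cof_comp[OF k'cof mcof] ty by simp
  have i1cof: "i1 \<in> cof" unfolding i1_def using cof_comp[OF jcof c0] ty by simp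
  have i1h: "i1 \<in> hom C U IU" unfolding i1_def using ty by (simp add: hom_def)
  have "\<sigma> \<cdot> i1 = Id C U" unfolding i1_def using sc0x[of j] ty dj by simp
  hence i1we: "i1 \<in> we" using W2[OF i1h sh] sg Id_we[OF U] by simp
  have th: "t \<in> hom C V M" unfolding t_def using ty by (simp add: hom_def)
  have P4: "pushout C i1 g G t"
    unfolding pushout_def
  proof (intro conjI allI impI)
    show "i1 \<in> Arr C" "g \<in> Arr C" "G \<in> Arr C" "t \<in> Arr C" using i1h th ty by (auto simp: hom_def)
    show "Dom C i1 = Dom C g" "Dom C G = Cod C i1" "Dom C t = Cod C g" "Cod C G = Cod C t"
      using i1h th ty by (auto simp: hom_def)
    show "G \<cdot> i1 = t \<cdot> g" unfolding i1_def t_def using Gc0x[of j] mujx[of "Id C U"] ty U by simp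
  next
    fix Q a b assume ab: "a \<in> hom C (Cod C i1) Q \<and> b \<in> hom C (Cod C g) Q \<and> a \<cdot> i1 = b \<cdot> g"
    hence a: "a \<in> hom C IU Q" and b: "b \<in> hom C V Q" and abe: "a \<cdot> (c0 \<cdot> j) = b \<cdot> g"
      using i1h ty unfolding i1_def by (auto simp: hom_def)
    have a0: "a \<cdot> (c0 \<cdot> k) \<in> hom C U Q" using a ty by (simp add: hom_def)
    obtain \<gamma> where ga: "\<gamma> \<in> hom C T Q" and gk: "\<gamma> \<cdot> k' = a \<cdot> (c0 \<cdot> k)" and gj: "\<gamma> \<cdot> j' = b"
      using copair[OF P2 U V a0 b] unfolding T_def by blast
    note ty2 = homD[OF a] homD[OF b] homD[OF ga]
    have "a \<cdot> c0 = \<gamma> \<cdot> \<mu>"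
    proof (rule po_uniq[OF P1, of _ Q])
      show "a \<cdot> c0 \<in> hom C (Cod C k) Q" "\<gamma> \<cdot> \<mu> \<in> hom C (Cod C k) Q" using ty ty2 unfolding S_def[symmetric]
        by (auto simp: hom_def)
      show "(a \<cdot> c0) \<cdot> k = (\<gamma> \<cdot> \<mu>) \<cdot> k" using ty ty2 gk muk by simp
      show "(a \<cdot> c0) \<cdot> j = (\<gamma> \<cdot> \<mu>) \<cdot> j" using ty ty2 abe muj pair_ext[OF gj] by simp
    qed
    then obtain u where u: "u \<in> hom C (Cod C G) Q" and uG: "u \<cdot> G = a" and um: "u \<cdot> m = \<gamma>"
      using po_univ[OF P3, of a Q \<gamma>] a ga ty by (auto simp: hom_def)
    show "\<exists>!u. u \<in> hom C (Cod C G) Q \<and> u \<cdot> G = a \<and> u \<cdot> t = b"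
    proof (rule ex1I[of _ u])
      show "u \<in> hom C (Cod C G) Q \<and> u \<cdot> G = a \<and> u \<cdot> t = b"
        using u uG gj pair_ext[OF um] ty ty2 unfolding t_def by (auto simp: hom_def)
    next
      fix v assume v: "v \<in> hom C (Cod C G) Q \<and> v \<cdot> G = a \<and> v \<cdot> t = b"
      have vm: "v \<cdot> m = \<gamma>"
      proof (rule po_uniq[OF P2, of _ Q])
        show "v \<cdot> m \<in> hom C (Cod C k') Q" "\<gamma> \<in> hom C (Cod C k') Q" using v ty ga unfolding T_def[symmetric] M_def[symmetric]
          by (auto simp: hom_def)
        have "(v \<cdot> m) \<cdot> k' = v \<cdot> m \<cdot> \<mu> \<cdot> k" using muk v ty unfolding M_def[symmetric] by (simp add: hom_def)
        also have "\<dots> = v \<cdot> G \<cdot> c0 \<cdot> k" using Gc0x[of k] ty by simp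
        also have "\<dots> = a \<cdot> c0 \<cdot> k" using v ty pair_ext[of v G a] unfolding M_def[symmetric] by (simp add: hom_def)
        finally show "(v \<cdot> m) \<cdot> k' = \<gamma> \<cdot> k'" using gk by simp
        show "(v \<cdot> m) \<cdot> j' = \<gamma> \<cdot> j'" using v gj ty unfolding t_def M_def[symmetric] by (simp add: hom_def)
      qed
      show "v = u" using po_uniq[OF P3, of v Q u] v u uG vm um by auto
    qed
  qed
  have twe: "t \<in> we" using po_tcof[OF i1cof i1we P4] by blast
  have idV: "Id C V \<in> hom C V V" using Id_hom[OF V] .
  obtain \<beta> where bh: "\<beta> \<in> hom C T V" and bk: "\<beta> \<cdot> k' = g" and bj: "\<beta> \<cdot> j' = Id C V"
    using copair[OF P2 U V g idV] unfolding T_def by blast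
  note ty3 = homD[OF bh]
  have "g \<cdot> \<sigma> \<cdot> c0 = \<beta> \<cdot> \<mu>"
  proof (rule po_uniq[OF P1, of _ V])
    show "g \<cdot> \<sigma> \<cdot> c0 \<in> hom C (Cod C k) V" "\<beta> \<cdot> \<mu> \<in> hom C (Cod C k) V" using ty ty3 unfolding S_def[symmetric]
      by (auto simp: hom_def)
    show "(g \<cdot> \<sigma> \<cdot> c0) \<cdot> k = (\<beta> \<cdot> \<mu>) \<cdot> k" using ty ty3 sc0x[of k] dk bk mukx[of "Id C U"] U by simp
    show "(g \<cdot> \<sigma> \<cdot> c0) \<cdot> j = (\<beta> \<cdot> \<mu>) \<cdot> j" using ty ty3 sc0x[of j] dj mujx[of "Id C U"] U pair_ext[OF bj] by simp
  qed
  then obtain q where q: "q \<in> hom C (Cod C G) V" and qG: "q \<cdot> G = g \<cdot> \<sigma>" and qm: "q \<cdot> m = \<beta>"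
    using po_univ[OF P3, of "g \<cdot> \<sigma>" V \<beta>] bh ty by (auto simp: hom_def)
  have qh: "q \<in> hom C M V" using q unfolding M_def .
  have "q \<cdot> t = Id C V" unfolding t_def using pair_ext[OF qm] ty homD[OF qh] bj by simp
  hence qwe: "q \<in> we" using W1[OF th qh] twe Id_we[OF V] by simp
  have "q \<cdot> s = g" unfolding s_def using pair_ext[OF qm] ty homD[OF qh] bk by simp
  moreover have "s \<in> hom C U M" unfolding s_def using ty by (simp add: hom_def)
  ultimately show ?thesis using scof qh qwe by blast
qed

end


context cylcat begin

lemma codiag: assumes P: "pushout C i i k j" and i: "i \<in> hom C A B"
  shows "\<exists>d. d \<in> hom C (Cod C k) B \<and> d \<cdot> k = Id C B \<and> d \<cdot> j = Id C B"
proof -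
  have B: "B \<in> Obj C" using hom_Obj[OF i] by blast
  show ?thesis using po_univ[OF P, of "Id C B" B "Id C B"] i B by (auto simp: hom_def)
qed

lemma rel_cyl_ex: assumes i: "i \<in> hom C A B" and ic: "i \<in> cof"
  shows "\<exists>k j c p. rel_cyl C cof we i k j c p"
proof -
  obtain k j where P: "pushout C i i k j" using po_exists[OF ic, of i] i by (auto simp: hom_def)
  obtain d where d: "d \<in> hom C (Cod C k) B" and dk: "d \<cdot> k = Id C B" and dj: "d \<cdot> j = Id C B"
    using codiag[OF P i] by blast
  obtain M c p where c: "c \<in> hom C (Cod C k) M" "c \<in> cof" and p: "p \<in> hom C M B" "p \<in> we" and pc: "p \<cdot> c = d"
    using factor[OF d] by blast
  have "rel_cyl C cof we i k j c p" unfolding rel_cyl_def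
    using ic P c p pc dk dj i by (auto simp: hom_def)
  thus ?thesis by blast
qed

lemma rel_cylD: assumes R: "rel_cyl C cof we i k j c p" and i: "i \<in> hom C A B"
  shows "pushout C i i k j \<and> i \<in> cof \<and> c \<in> cof \<and> p \<in> we \<and> k \<in> hom C B (Cod C k) \<and> j \<in> hom C B (Cod C k)
    \<and> c \<in> hom C (Cod C k) (Cod C c) \<and> p \<in> hom C (Cod C c) B \<and> p \<cdot> (c \<cdot> k) = Id C B \<and> p \<cdot> (c \<cdot> j) = Id C B"
proof -
  have P: "pushout C i i k j" and cc': "c \<in> cof" "p \<in> we" "Dom C c = Cod C k" "Cod C c = Dom C p" "Cod C p = Cod C i"
    "(p \<cdot> c) \<cdot> k = Id C (Cod C i)" "(p \<cdot> c) \<cdot> j = Id C (Cod C i)" "i \<in> cof"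
    using R unfolding rel_cyl_def by auto
  have ty: "c \<in> Arr C" "p \<in> Arr C" using cc' cof_Arr we_Arr by auto
  have kh: "k \<in> hom C B (Cod C k)" "j \<in> hom C B (Cod C k)" using poD[OF P] i by (auto simp: hom_def)
  show ?thesis using P cc' ty kh i by (auto simp: hom_def)
qed

lemma lift: assumes f: "f \<in> hom C X Y" "f \<in> we" and i: "i \<in> hom C A B" "i \<in> cof"
  and u: "u \<in> hom C A X" and w: "w \<in> hom C B Y" and sq: "f \<cdot> u = w \<cdot> i"
  shows "\<exists>a. a \<in> hom C B X \<and> a \<cdot> i = u \<and>
     (\<exists>k j c p h. rel_cyl C cof we i k j c p \<and> h \<in> hom C (Cod C c) Y \<and> h \<cdot> (c \<cdot> k) = f \<cdot> a \<and> h \<cdot> (c \<cdot> j) = w)"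
proof -
  have X: "X \<in> Obj C" using hom_Obj[OF f(1)] by blast
  obtain b iP where P1: "pushout C i u b iP" using po_exists[OF i(2), of u] i u by (auto simp: hom_def)
  define P where "P = Cod C b"
  have b: "b \<in> hom C B P" and iP: "iP \<in> hom C X P" and biP: "b \<cdot> i = iP \<cdot> u"
    using poD[OF P1] i u unfolding P_def by (auto simp: hom_def)
  have iPc: "iP \<in> cof" using po_cof[OF i(2) P1] .
  obtain \<phi> where ph: "\<phi> \<in> hom C P Y" and phb: "\<phi> \<cdot> b = w" and phi: "\<phi> \<cdot> iP = f"
    using po_univ[OF P1, of w Y f] w f i u sq unfolding P_def by (auto simp: hom_def)
  obtain N c' q' where c': "c' \<in> hom C P N" "c' \<in> cof" and q': "q' \<in> hom C N Y" "q' \<in> we" and qc: "q' \<cdot> c' = \<phi>"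
    using factor[OF ph] by blast
  note ty = homD[OF f(1)] homD[OF i(1)] homD[OF u] homD[OF w] homD[OF b] homD[OF iP] homD[OF ph]
    homD[OF c'(1)] homD[OF q'(1)]
  define e where "e = c' \<cdot> iP"
  have eh: "e \<in> hom C X N" unfolding e_def using ty by (simp add: hom_def)
  have ec: "e \<in> cof" unfolding e_def using cof_comp[OF iPc c'(2)] ty by simp
  have qe: "q' \<cdot> e = f" unfolding e_def using pair_ext[OF qc] qc ty phi by simp
  have ewe: "e \<in> we" using W2[OF eh q'(1)] qe f(2) q'(2) by simp
  obtain r where r: "r \<in> hom C N X" and re: "r \<cdot> e = Id C X"
    using retr[OF ec ewe] eh by (auto simp: hom_def)
  note ty2 = homD[OF eh] homD[OF r]
  define \<beta> where "\<beta> = c' \<cdot> b"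
  have bh: "\<beta> \<in> hom C B N" unfolding \<beta>_def using ty by (simp add: hom_def)
  have bi: "\<beta> \<cdot> i = e \<cdot> u" unfolding \<beta>_def e_def using ty biP by simp
  define a where "a = r \<cdot> \<beta>"
  have ah: "a \<in> hom C B X" unfolding a_def using bh ty2 by (simp add: hom_def)
  have ai: "a \<cdot> i = u" unfolding a_def using bh ty ty2 homD[OF bh] pair_ext[OF bi] bi pair_ext[OF re] re X by simp
  obtain kB jB cB pB where R: "rel_cyl C cof we i kB jB cB pB" using rel_cyl_ex[OF i] by blast
  define D where "D = Cod C kB"
  define IB where "IB = Cod C cB"
  have RD: "pushout C i i kB jB" "cB \<in> cof" "kB \<in> hom C B D" "jB \<in> hom C B D" "cB \<in> hom C D IB"
    "pB \<in> hom C IB B" "pB \<cdot> (cB \<cdot> kB) = Id C B" "pB \<cdot> (cB \<cdot> jB) = Id C B"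
    using rel_cylD[OF R i(1)] unfolding D_def IB_def by auto
  obtain kN jN where P2: "pushout C e e kN jN" using po_exists[OF ec, of e] eh by (auto simp: hom_def)
  define DN where "DN = Cod C kN"
  have kN: "kN \<in> hom C N DN" and jN: "jN \<in> hom C N DN" and kNe: "kN \<cdot> e = jN \<cdot> e"
    using poD[OF P2] eh unfolding DN_def by (auto simp: hom_def)
  have kNwe: "kN \<in> we" using po_tcof[OF ec ewe po_sym[OF P2]] by blast
  obtain nb where nb: "nb \<in> hom C DN N" and nbk: "nb \<cdot> kN = Id C N" and nbj: "nb \<cdot> jN = Id C N"
    using codiag[OF P2 eh] unfolding DN_def by blast
  have N: "N \<in> Obj C" using hom_Obj[OF eh] by blast
  have nbwe: "nb \<in> we" using W1[OF kN nb] nbk kNwe Id_we[OF N] by simp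
  note ty3 = homD[OF bh] homD[OF RD(3)] homD[OF RD(4)] homD[OF RD(5)] homD[OF RD(6)] homD[OF kN] homD[OF jN] homD[OF nb]
  have kNex: "kN \<cdot> (e \<cdot> x) = jN \<cdot> (e \<cdot> x)" if "x \<in> Arr C" "Cod C x = X" for x
    using pair_ext[OF kNe] kNe that ty ty2 ty3 by simp
  have bix: "\<beta> \<cdot> (i \<cdot> x) = e \<cdot> (u \<cdot> x)" if "x \<in> Arr C" "Cod C x = A" for x
    using pair_ext[OF bi] bi that ty ty2 ty3 by simp
  have cmp1: "(kN \<cdot> \<beta>) \<cdot> i = (jN \<cdot> \<beta>) \<cdot> i" using ty ty2 ty3 bi kNex[of u] by simp
  have h1: "kN \<cdot> \<beta> \<in> hom C (Cod C i) DN" "jN \<cdot> \<beta> \<in> hom C (Cod C i) DN" using ty ty2 ty3 by (auto simp: hom_def)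
  obtain \<psi> where ps: "\<psi> \<in> hom C D DN" and psk: "\<psi> \<cdot> kB = kN \<cdot> \<beta>" and psj: "\<psi> \<cdot> jB = jN \<cdot> \<beta>"
    using po_univ[OF RD(1) h1 cmp1] unfolding D_def by blast
  obtain \<kappa> mQ where P3: "pushout C cB \<psi> \<kappa> mQ" using po_exists[OF RD(2), of \<psi>] ps ty3 by (auto simp: hom_def)
  define Q where "Q = Cod C \<kappa>"
  have ka: "\<kappa> \<in> hom C IB Q" and mQ: "mQ \<in> hom C DN Q" and kacB: "\<kappa> \<cdot> cB = mQ \<cdot> \<psi>"
    using poD[OF P3] ps ty3 unfolding Q_def by (auto simp: hom_def)
  have mQc: "mQ \<in> cof" using po_cof[OF RD(2) P3] .
  note ty4 = homD[OF ps] homD[OF ka] homD[OF mQ]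
  have "\<beta> \<cdot> pB \<cdot> cB = nb \<cdot> \<psi>"
  proof (rule po_uniq[OF RD(1), of _ N])
    show "\<beta> \<cdot> pB \<cdot> cB \<in> hom C (Cod C kB) N" "nb \<cdot> \<psi> \<in> hom C (Cod C kB) N"
      using ty ty2 ty3 ty4 unfolding D_def[symmetric] by (auto simp: hom_def)
    show "(\<beta> \<cdot> pB \<cdot> cB) \<cdot> kB = (nb \<cdot> \<psi>) \<cdot> kB"
      using ty ty2 ty3 ty4 RD(7) psk pair_ext[OF nbk] nbk by simp
    show "(\<beta> \<cdot> pB \<cdot> cB) \<cdot> jB = (nb \<cdot> \<psi>) \<cdot> jB"
      using ty ty2 ty3 ty4 RD(8) psj pair_ext[OF nbj] nbj by simp
  qed
  then obtain \<tau> where tau: "\<tau> \<in> hom C Q N" and tk: "\<tau> \<cdot> \<kappa> = \<beta> \<cdot> pB" and tm: "\<tau> \<cdot> mQ = nb"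
    using po_univ[OF P3, of "\<beta> \<cdot> pB" N nb] ty ty2 ty3 ty4 unfolding Q_def by (auto simp: hom_def)
  obtain IN c2 p2 where c2: "c2 \<in> hom C Q IN" "c2 \<in> cof" and p2: "p2 \<in> hom C IN N" "p2 \<in> we" and pc2: "p2 \<cdot> c2 = \<tau>"
    using factor[OF tau] by blast
  note ty5 = homD[OF tau] homD[OF c2(1)] homD[OF p2(1)]
  define l where "l = c2 \<cdot> mQ"
  have lh: "l \<in> hom C DN IN" unfolding l_def using ty4 ty5 by (simp add: hom_def)
  have lc: "l \<in> cof" unfolding l_def using cof_comp[OF mQc c2(2)] ty4 ty5 by simp
  have "p2 \<cdot> l = nb" unfolding l_def using pair_ext[OF pc2] pc2 ty4 ty5 tm by simp
  hence lwe: "l \<in> we" using W2[OF lh p2(1)] nbwe p2(2) by simp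
  obtain \<rho> where rho: "\<rho> \<in> hom C IN DN" and rl: "\<rho> \<cdot> l = Id C DN"
    using retr[OF lc lwe] lh by (auto simp: hom_def)
  have g1: "f \<cdot> r \<in> hom C N Y" using ty ty2 by (simp add: hom_def)
  have g1e: "(f \<cdot> r) \<cdot> e = q' \<cdot> e" using ty ty2 re qe X by simp
  obtain \<gamma> where ga: "\<gamma> \<in> hom C DN Y" and gk: "\<gamma> \<cdot> kN = f \<cdot> r" and gj: "\<gamma> \<cdot> jN = q'"
    using po_univ[OF P2, of "f \<cdot> r" Y q'] g1 g1e q'(1) eh unfolding DN_def by (auto simp: hom_def)
  note ty6 = homD[OF rho] homD[OF ga] homD[OF lh]
  define h where "h = \<gamma> \<cdot> \<rho> \<cdot> c2 \<cdot> \<kappa>"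
  have hh: "h \<in> hom C IB Y" unfolding h_def using ty4 ty5 ty6 by (simp add: hom_def)
  have DN: "DN \<in> Obj C" using hom_Obj[OF kN] by blast
  have lx: "\<rho> \<cdot> (c2 \<cdot> (mQ \<cdot> x)) = x" if "x \<in> Arr C" "Cod C x = DN" for x
    using pair_ext[OF rl[unfolded l_def]] that ty4 ty5 ty6 DN by simp
  have kx: "\<kappa> \<cdot> (cB \<cdot> x) = mQ \<cdot> (\<psi> \<cdot> x)" if "x \<in> Arr C" "Cod C x = D" for x
    using pair_ext[OF kacB] kacB that ty3 ty4 by simp
  have h1: "h \<cdot> (cB \<cdot> kB) = f \<cdot> a" unfolding h_def a_def
    using ty ty2 ty3 ty4 ty5 ty6 kx[of kB] lx[of "\<psi> \<cdot> kB"] psk pair_ext[OF gk] gk by simp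
  have h2: "h \<cdot> (cB \<cdot> jB) = w" unfolding h_def
    using ty ty2 ty3 ty4 ty5 ty6 kx[of jB] lx[of "\<psi> \<cdot> jB"] psj pair_ext[OF gj] gj pair_ext[OF qc] qc phb
    unfolding \<beta>_def by simp
  show ?thesis using ah ai R hh h1 h2 unfolding IB_def by blast
qed

end


context cylcat begin

lemma conv: assumes f: "f \<in> hom C X Y" and c: "c \<in> hom C X M" "c \<in> cof" and p: "p \<in> hom C M Y" "p \<in> we"
  and pc: "p \<cdot> c = f" and a0: "a0 \<in> hom C M X" and a0c: "a0 \<cdot> c = Id C X"
  and R: "rel_cyl C cof we c k j c' p'" and h0: "h0 \<in> hom C (Cod C c') Y"
  and hk: "h0 \<cdot> (c' \<cdot> k) = f \<cdot> a0" and hj: "h0 \<cdot> (c' \<cdot> j) = p"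
  shows "f \<in> we"
proof -
  have X: "X \<in> Obj C" and M: "M \<in> Obj C" using hom_Obj[OF c(1)] by auto
  define D where "D = Cod C k"
  define I where "I = Cod C c'"
  have RD: "pushout C c c k j" "c' \<in> cof" "p' \<in> we" "k \<in> hom C M D" "j \<in> hom C M D" "c' \<in> hom C D I"
    "p' \<in> hom C I M" "p' \<cdot> (c' \<cdot> k) = Id C M" "p' \<cdot> (c' \<cdot> j) = Id C M"
    using rel_cylD[OF R c(1)] unfolding D_def I_def by auto
  note ty = homD[OF f] homD[OF c(1)] homD[OF p(1)] homD[OF a0] homD[OF RD(4)] homD[OF RD(5)] homD[OF RD(6)]
    homD[OF RD(7)] homD[OF h0[folded I_def]]
  have ca: "c \<cdot> a0 \<in> hom C M M" using ty by (simp add: hom_def)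
  have e1: "(c \<cdot> a0) \<cdot> c = Id C M \<cdot> c" using ty a0c X by simp
  obtain u' where u': "u' \<in> hom C D M" and uk: "u' \<cdot> k = c \<cdot> a0" and uj: "u' \<cdot> j = Id C M"
    using po_univ[OF RD(1), of "c \<cdot> a0" M "Id C M"] ca Id_hom[OF M] e1 ty unfolding D_def by (auto simp: hom_def)
  note ty2 = homD[OF u']
  have sq: "p \<cdot> u' = h0 \<cdot> c'"
  proof (rule po_uniq[OF RD(1), of _ Y])
    show "p \<cdot> u' \<in> hom C (Cod C k) Y" "h0 \<cdot> c' \<in> hom C (Cod C k) Y" using ty ty2 unfolding D_def[symmetric]
      by (auto simp: hom_def)
    show "(p \<cdot> u') \<cdot> k = (h0 \<cdot> c') \<cdot> k" using ty ty2 uk hk pc pair_ext[OF pc] by simp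
    show "(p \<cdot> u') \<cdot> j = (h0 \<cdot> c') \<cdot> j" using ty ty2 uj hj M by simp
  qed
  obtain a' where a': "a' \<in> hom C I M" and ac: "a' \<cdot> c' = u'"
    using lift[OF p RD(6) RD(2) u' h0[folded I_def] sq] by blast
  note ty3 = homD[OF a']
  have cj: "c' \<cdot> j \<in> hom C M I" "c' \<cdot> k \<in> hom C M I" using ty by (auto simp: hom_def)
  have cjwe: "c' \<cdot> j \<in> we" using W2[OF cj(1) RD(7)] RD(9) RD(3) Id_we[OF M] by simp
  have ckwe: "c' \<cdot> k \<in> we" using W2[OF cj(2) RD(7)] RD(8) RD(3) Id_we[OF M] by simp
  have "a' \<cdot> (c' \<cdot> j) = Id C M" using pair_ext[OF ac] ac uj ty ty2 ty3 by simp
  hence awe: "a' \<in> we" using W1[OF cj(1) a'] cjwe Id_we[OF M] by simp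
  have "a' \<cdot> (c' \<cdot> k) = c \<cdot> a0" using pair_ext[OF ac] ac uk ty ty2 ty3 by simp
  moreover have "a' \<cdot> (c' \<cdot> k) \<in> we" using we_comp[OF ckwe awe] ty ty3 by simp
  ultimately have cawe: "c \<cdot> a0 \<in> we" by simp
  have cwe: "c \<in> we" using two_six[of c a0 c] cawe a0c Id_we[OF X] ty by simp
  show "f \<in> we" using we_comp[OF cwe p(2)] pc ty by simp
qed

lemma yon_in_tilde: assumes X: "X \<in> Obj C" shows "in_tilde C cof (yon C X)"
  unfolding in_tilde_def
proof (intro conjI allI impI)
  show "presheaf C (yon C X)" unfolding presheaf_def yon_def by (auto simp: hom_def)
next
  fix z assume "initial C z"
  then obtain e where "e \<in> hom C z X" "\<forall>e'. e' \<in> hom C z X \<longrightarrow> e' = e" using X unfolding initial_def by blast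
  thus "\<exists>x. PObj (yon C X) z = {x}" unfolding yon_def by auto
next
  fix i f k j assume "i \<in> cof \<and> pushout C i f k j"
  hence P: "pushout C i f k j" by blast
  have d: "i \<in> Arr C \<and> f \<in> Arr C \<and> k \<in> Arr C \<and> j \<in> Arr C \<and>
   Dom C f = Dom C i \<and> Dom C k = Cod C i \<and> Dom C j = Cod C f \<and> Cod C j = Cod C k \<and> k \<cdot> i = j \<cdot> f"
    using poD[OF P] .
  show "bij_betw (\<lambda>x. (PMap (yon C X) k x, PMap (yon C X) j x)) (PObj (yon C X) (Cod C k))
          {(b, c). b \<in> PObj (yon C X) (Cod C i) \<and> c \<in> PObj (yon C X) (Cod C f) \<and> PMap (yon C X) i b = PMap (yon C X) f c}"
    unfolding yon_def bij_betw_def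
  proof (simp, intro conjI)
    show "inj_on (\<lambda>x. (x \<cdot> k, x \<cdot> j)) (hom C (Cod C k) X)"
      by (rule inj_onI) (use po_uniq[OF P] in auto)
    show "(\<lambda>x. (x \<cdot> k, x \<cdot> j)) ` hom C (Cod C k) X =
      {(b, c). b \<in> hom C (Cod C i) X \<and> c \<in> hom C (Cod C f) X \<and> b \<cdot> i = c \<cdot> f}"
    proof (intro equalityI subsetI)
      fix y assume "y \<in> (\<lambda>x. (x \<cdot> k, x \<cdot> j)) ` hom C (Cod C k) X"
      then obtain x where x: "x \<in> hom C (Cod C k) X" and y: "y = (x \<cdot> k, x \<cdot> j)" by blast
      have "(x \<cdot> k) \<cdot> i = (x \<cdot> j) \<cdot> f" using d homD[OF x] by simp
      thus "y \<in> {(b, c). b \<in> hom C (Cod C i) X \<and> c \<in> hom C (Cod C f) X \<and> b \<cdot> i = c \<cdot> f}"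
        using y d homD[OF x] by (auto simp: hom_def)
    next
      fix y assume "y \<in> {(b, c). b \<in> hom C (Cod C i) X \<and> c \<in> hom C (Cod C f) X \<and> b \<cdot> i = c \<cdot> f}"
      then obtain b c where y: "y = (b, c)" and b: "b \<in> hom C (Cod C i) X" and c: "c \<in> hom C (Cod C f) X"
        and e: "b \<cdot> i = c \<cdot> f" by blast
      obtain u where "u \<in> hom C (Cod C k) X" "u \<cdot> k = b" "u \<cdot> j = c" using po_univ[OF P b c e] by blast
      thus "y \<in> (\<lambda>x. (x \<cdot> k, x \<cdot> j)) ` hom C (Cod C k) X" using y by force
    qed
  qed
qed

lemma yon_nat: assumes f: "f \<in> hom C X Y" shows "nat_trans C (yon C X) (yon C Y) (yon_arr C f)"
  unfolding nat_trans_def yon_def yon_arr_def using homD[OF f] by (auto simp: hom_def)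

lemma yoneda: assumes A: "A \<in> Obj C" and n: "nat_trans C (yon C A) (yon C Y) \<eta>"
  shows "\<eta> A (Id C A) \<in> hom C A Y \<and> (\<forall>B g. g \<in> hom C B A \<longrightarrow> \<eta> B g = \<eta> A (Id C A) \<cdot> g)"
proof -
  have n1: "\<forall>A\<in>Obj C. \<forall>x\<in>hom C A A'. \<eta> A x \<in> hom C A Y" if "A' = A" for A'
    using n that unfolding nat_trans_def yon_def by simp
  have n2: "\<forall>f\<in>Arr C. \<forall>x\<in>hom C (Cod C f) A. \<eta> (Dom C f) (x \<cdot> f) = \<eta> (Cod C f) x \<cdot> f"
    using n unfolding nat_trans_def yon_def by simp
  have i: "Id C A \<in> hom C A A" using Id_hom[OF A] .
  have 1: "\<eta> A (Id C A) \<in> hom C A Y" using n1[of A] A i by blast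
  have "\<eta> B g = \<eta> A (Id C A) \<cdot> g" if g: "g \<in> hom C B A" for B g
    using n2[rule_format, of g "Id C A"] homD[OF g] i A by simp
  thus ?thesis using 1 by blast
qed

end


context cylcat begin

lemma dir1: assumes f: "f \<in> hom C X Y" and fw: "f \<in> we"
  shows "we_tilde C cof we (yon C X) (yon C Y) (yon_arr C f)"
  unfolding we_tilde_def
proof (intro conjI allI impI)
  have X: "X \<in> Obj C" and Y: "Y \<in> Obj C" using hom_Obj[OF f] by auto
  show "in_tilde C cof (yon C X)" "in_tilde C cof (yon C Y)" using yon_in_tilde X Y by auto
  show "nat_trans C (yon C X) (yon C Y) (yon_arr C f)" using yon_nat[OF f] .
  fix i u w assume H: "i \<in> cof \<and> nat_trans C (yon C (Dom C i)) (yon C X) u \<and>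
       nat_trans C (yon C (Cod C i)) (yon C Y) w \<and>
       nt_eq C (yon C (Dom C i)) (nt_comp (yon_arr C f) u) (nt_comp w (yon_arr C i))"
  define A where "A = Dom C i"
  define B where "B = Cod C i"
  have ic: "i \<in> cof" using H by blast
  have ih: "i \<in> hom C A B" using ic cof_Arr unfolding A_def B_def hom_def by auto
  have A: "A \<in> Obj C" and B: "B \<in> Obj C" using hom_Obj[OF ih] by auto
  have un: "nat_trans C (yon C A) (yon C X) u" and wn: "nat_trans C (yon C B) (yon C Y) w"
    using H unfolding A_def B_def by auto
  have eq: "\<forall>D\<in>Obj C. \<forall>x\<in>hom C D A. f \<cdot> u D x = w D (i \<cdot> x)"
    using H unfolding A_def nt_eq_def nt_comp_def yon_arr_def yon_def by simp
  define u0 where "u0 = u A (Id C A)"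
  define w0 where "w0 = w B (Id C B)"
  have Yu: "u0 \<in> hom C A X" "\<And>D g. g \<in> hom C D A \<Longrightarrow> u D g = u0 \<cdot> g"
    using yoneda[OF A un] unfolding u0_def by auto
  have Yw: "w0 \<in> hom C B Y" "\<And>D g. g \<in> hom C D B \<Longrightarrow> w D g = w0 \<cdot> g"
    using yoneda[OF B wn] unfolding w0_def by auto
  have "f \<cdot> u A (Id C A) = w A (i \<cdot> Id C A)" using eq A Id_hom[OF A] by blast
  hence sq: "f \<cdot> u0 = w0 \<cdot> i" using Yw(2)[OF ih] homD[OF ih] A unfolding u0_def by simp
  obtain a0 k j c p h0 where a0: "a0 \<in> hom C B X" and ai: "a0 \<cdot> i = u0" and R: "rel_cyl C cof we i k j c p"
    and h0: "h0 \<in> hom C (Cod C c) Y" and hk: "h0 \<cdot> (c \<cdot> k) = f \<cdot> a0" and hj: "h0 \<cdot> (c \<cdot> j) = w0"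
    using lift[OF f fw ih ic Yu(1) Yw(1) sq] by blast
  have RD: "k \<in> hom C B (Cod C k)" "j \<in> hom C B (Cod C k)" "c \<in> hom C (Cod C k) (Cod C c)"
    using rel_cylD[OF R ih] by auto
  note ty = homD[OF f] homD[OF ih] homD[OF a0] homD[OF h0] homD[OF RD(1)] homD[OF RD(2)] homD[OF RD(3)]
    homD[OF Yu(1)] homD[OF Yw(1)]
  show "\<exists>a. nat_trans C (yon C (Cod C i)) (yon C X) a \<and>
        nt_eq C (yon C (Dom C i)) (nt_comp a (yon_arr C i)) u \<and>
        (\<exists>k j c p h. rel_cyl C cof we i k j c p \<and>
           nat_trans C (yon C (Cod C c)) (yon C Y) h \<and>
           nt_eq C (yon C (Cod C i)) (nt_comp h (yon_arr C (c \<cdot> k))) (nt_comp (yon_arr C f) a) \<and>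
           nt_eq C (yon C (Cod C i)) (nt_comp h (yon_arr C (c \<cdot> j))) w)"
  proof (intro exI conjI)
    show "nat_trans C (yon C (Cod C i)) (yon C X) (yon_arr C a0)" using yon_nat[OF a0] unfolding B_def .
    show "nt_eq C (yon C (Dom C i)) (nt_comp (yon_arr C a0) (yon_arr C i)) u"
      unfolding nt_eq_def nt_comp_def yon_arr_def yon_def A_def[symmetric]
    proof (simp, intro ballI)
      fix D x assume x: "x \<in> hom C D A"
      have "u D x = u0 \<cdot> x" using Yu(2)[OF x] .
      thus "a0 \<cdot> i \<cdot> x = u D x" using x ty ai pair_ext[OF ai] by (simp add: hom_def)
    qed
    show "rel_cyl C cof we i k j c p" by fact
    show "nat_trans C (yon C (Cod C c)) (yon C Y) (yon_arr C h0)" using yon_nat[OF h0] .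
    show "nt_eq C (yon C (Cod C i)) (nt_comp (yon_arr C h0) (yon_arr C (c \<cdot> k))) (nt_comp (yon_arr C f) (yon_arr C a0))"
      unfolding nt_eq_def nt_comp_def yon_arr_def yon_def B_def[symmetric]
    proof (simp, intro ballI)
      fix D x assume x: "x \<in> hom C D B"
      have "h0 \<cdot> ((c \<cdot> k) \<cdot> x) = (f \<cdot> a0) \<cdot> x" by (rule pair_ext[OF hk]) (use ty x in \<open>auto simp: hom_def\<close>)
      thus "h0 \<cdot> (c \<cdot> k) \<cdot> x = f \<cdot> a0 \<cdot> x" using ty x by (simp add: hom_def)
    qed
    show "nt_eq C (yon C (Cod C i)) (nt_comp (yon_arr C h0) (yon_arr C (c \<cdot> j))) w"
      unfolding nt_eq_def nt_comp_def yon_arr_def yon_def B_def[symmetric]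
    proof (simp, intro ballI)
      fix D x assume x: "x \<in> hom C D B"
      have "h0 \<cdot> ((c \<cdot> j) \<cdot> x) = w0 \<cdot> x" by (rule pair_ext[OF hj]) (use ty x in \<open>auto simp: hom_def\<close>)
      thus "h0 \<cdot> (c \<cdot> j) \<cdot> x = w D x" using Yw(2)[OF x] ty x by (simp add: hom_def)
    qed
  qed
qed

lemma dir2: assumes f: "f \<in> hom C X Y" and W: "we_tilde C cof we (yon C X) (yon C Y) (yon_arr C f)"
  shows "f \<in> we"
proof -
  have X: "X \<in> Obj C" and Y: "Y \<in> Obj C" using hom_Obj[OF f] by auto
  obtain M c p where c: "c \<in> hom C X M" "c \<in> cof" and p: "p \<in> hom C M Y" "p \<in> we" and pc: "p \<cdot> c = f"
    using factor[OF f] by blast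
  have M: "M \<in> Obj C" using hom_Obj[OF c(1)] by auto
  note ty = homD[OF f] homD[OF c(1)] homD[OF p(1)]
  have W': "\<And>i u w. i \<in> cof \<Longrightarrow>
        nat_trans C (yon C (Dom C i)) (yon C X) u \<Longrightarrow> nat_trans C (yon C (Cod C i)) (yon C Y) w \<Longrightarrow>
        nt_eq C (yon C (Dom C i)) (nt_comp (yon_arr C f) u) (nt_comp w (yon_arr C i)) \<Longrightarrow>
        (\<exists>a. nat_trans C (yon C (Cod C i)) (yon C X) a \<and>
             nt_eq C (yon C (Dom C i)) (nt_comp a (yon_arr C i)) u \<and>
             (\<exists>k j c p h. rel_cyl C cof we i k j c p \<and>
                nat_trans C (yon C (Cod C c)) (yon C Y) h \<and>
                nt_eq C (yon C (Cod C i)) (nt_comp h (yon_arr C (Comp C c k))) (nt_comp (yon_arr C f) a) \<and>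
                nt_eq C (yon C (Cod C i)) (nt_comp h (yon_arr C (Comp C c j))) w))"
    using W unfolding we_tilde_def by blast
  have n1: "nat_trans C (yon C (Dom C c)) (yon C X) (yon_arr C (Id C X))" using yon_nat[OF Id_hom[OF X]] ty by simp
  have n2: "nat_trans C (yon C (Cod C c)) (yon C Y) (yon_arr C p)" using yon_nat[OF p(1)] ty by simp
  have n3: "nt_eq C (yon C (Dom C c)) (nt_comp (yon_arr C f) (yon_arr C (Id C X))) (nt_comp (yon_arr C p) (yon_arr C c))"
    unfolding nt_eq_def nt_comp_def yon_arr_def yon_def using ty pair_ext[OF pc] pc X by (auto simp: hom_def)
  obtain a k j c' p' h where an: "nat_trans C (yon C M) (yon C X) a"
    and ae: "nt_eq C (yon C X) (nt_comp a (yon_arr C c)) (yon_arr C (Id C X))"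
    and R: "rel_cyl C cof we c k j c' p'" and hn: "nat_trans C (yon C (Cod C c')) (yon C Y) h"
    and he1: "nt_eq C (yon C M) (nt_comp h (yon_arr C (c' \<cdot> k))) (nt_comp (yon_arr C f) a)"
    and he2: "nt_eq C (yon C M) (nt_comp h (yon_arr C (c' \<cdot> j))) (yon_arr C p)"
    using W'[OF c(2) n1 n2 n3] ty by auto
  define a0 where "a0 = a M (Id C M)"
  have Ya: "a0 \<in> hom C M X" "\<And>D g. g \<in> hom C D M \<Longrightarrow> a D g = a0 \<cdot> g"
    using yoneda[OF M an] unfolding a0_def by auto
  have "a X (c \<cdot> Id C X) = Id C X \<cdot> Id C X" using ae X Id_hom[OF X]
    unfolding nt_eq_def nt_comp_def yon_arr_def yon_def by simp
  hence a0c: "a0 \<cdot> c = Id C X" using Ya(2)[OF c(1)] ty X by simp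
  define I where "I = Cod C c'"
  have RD: "k \<in> hom C M (Cod C k)" "j \<in> hom C M (Cod C k)" "c' \<in> hom C (Cod C k) I"
    using rel_cylD[OF R c(1)] unfolding I_def by auto
  have I: "I \<in> Obj C" using hom_Obj[OF RD(3)] by auto
  define h0 where "h0 = h I (Id C I)"
  have Yh: "h0 \<in> hom C I Y" "\<And>D g. g \<in> hom C D I \<Longrightarrow> h D g = h0 \<cdot> g"
    using yoneda[OF I hn[folded I_def]] unfolding h0_def by auto
  note ty2 = homD[OF RD(1)] homD[OF RD(2)] homD[OF RD(3)] homD[OF Ya(1)] homD[OF Yh(1)]
  have ck: "c' \<cdot> k \<in> hom C M I" "c' \<cdot> j \<in> hom C M I" using ty2 by (auto simp: hom_def)
  have "h M ((c' \<cdot> k) \<cdot> Id C M) = f \<cdot> a M (Id C M)" using he1 M Id_hom[OF M]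
    unfolding nt_eq_def nt_comp_def yon_arr_def yon_def by simp
  hence hk: "h0 \<cdot> (c' \<cdot> k) = f \<cdot> a0" using Yh(2)[OF ck(1)] ty2 M unfolding a0_def by (simp add: hom_def)
  have "h M ((c' \<cdot> j) \<cdot> Id C M) = p \<cdot> Id C M" using he2 M Id_hom[OF M]
    unfolding nt_eq_def nt_comp_def yon_arr_def yon_def by simp
  hence hj: "h0 \<cdot> (c' \<cdot> j) = p" using Yh(2)[OF ck(2)] ty ty2 M by (simp add: hom_def)
  show ?thesis using conv[OF f c p pc Ya(1) a0c R Yh(1)[unfolded I_def] hk hj] .
qed

end

theorem mainTheorem8:
  fixes C :: "('o, 'm) cat" and cof we :: "'m set" and f :: 'm
  assumes "cylinder_category C cof we"
    and "f \<in> Arr C"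
  shows "f \<in> we \<longleftrightarrow>
         we_tilde C cof we (yon C (Dom C f)) (yon C (Cod C f)) (yon_arr C f)"
proof -
  interpret cylcat C cof we using assms(1) by unfold_locales
  have f: "f \<in> hom C (Dom C f) (Cod C f)" using assms(2) by (simp add: hom_def)
  show ?thesis using dir1[OF f] dir2[OF f] by blast
qed


end
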